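(* Let $n\ge1$ and let $\mathfrak{c}=\{c_{ij}\}_{1\le i<j\le n}$, $\mathfrak{\ell}=\{\ell_1,\dots,\ell_n\}$ be integers. Let $C=C(\mathfrak{c},\mathfrak{\ell})$ be the support of the associated Grossberg–Karshon twisted cube, $\{m_\sigma\}_{\sigma\in\{+,-\}^n}$ the Cartier data of the divisor $D(\mathfrak{c},\mathfrak{\ell})$ on $X(\mathfrak{c})$, and $P_{D(\mathfrak{c},\mathfrak{\ell})}$ the associated polytope. Then the following are equivalent: (a) $C$ is closed in $\mathbb{R}^n$ (Euclidean topology); (b) $m_\sigma\in C$ for all $\sigma$; (c) $m_{\sigma,k}\ge0$ for all $\sigma$ and all $1\le k\le n$, where $m_\sigma=(m_{\sigma,1},\dots,m_{\sigma,n})$; (d) $\mathfrak{c},\mathfrak{\ell}$ satisfy condition (P); (e) $C=P_{D(\mathfrak{c},\mathfrak{\ell})}$.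
   Context: Functions on $\mathbb{R}^n$: $A_n(x)=\ell_n$ and $A_j(x)=\ell_j-\sum_{k=j+1}^n c_{jk}x_k$ for $1\le j\le n-1$ (so $A_j$ depends only on $x_{j+1},\dots,x_n$). $C(\mathfrak{c},\mathfrak{\ell})$ is the set of $x\in\mathbb{R}^n$ such that for every $1\le k\le n$: $A_k(x)<x_k<0$ or $0\le x_k\le A_k(x)$. Condition (P): $\ell_n\ge0$, and for every $1\le k\le n-1$: whenever $(x_{k+1},\dots,x_n)$ satisfies $0\le x_i\le A_i(x_{i+1},\dots,x_n)$ for all $k+1\le i\le n$, then $A_k(x_{k+1},\dots,x_n)\ge0$. Toric data: $e_1^+,\dots,e_n^+$ standard basis of $\mathbb{R}^n$, $e_j^-:=-e_j^+-\sum_{k>j}c_{jk}e_k^+$; $\Sigma_{\mathfrak{c}}$ is the fan of cones generated by subsets of $\{e_1^\pm,\dots,e_n^\pm\}$ containing no pair $\{e_j^+,e_j^-\}$, with maximal cones $\mathrm{Cone}\{e_1^{\sigma_1},\dots,e_n^{\sigma_n}\}$, $\sigma\in\{+,-\}^n$; $X(\mathfrak{c})$ its smooth toric variety; $D(\mathfrak{c},\mathfrak{\ell})=\sum_j\ell_jD_{e_j^-}$ with $D_{e_j^-}$ the torus-invariant divisor of the ray through $e_j^-$. Its Cartier data is the collection $m_\sigma\in\mathbb{Z}^n$ with $\langle m_\sigma,u\rangle=-a_u$ for each ray generator $u\in\{e_1^{\sigma_1},\dots,e_n^{\sigma_n}\}$ of $\sigma$, where $a_{e_j^+}=0$, $a_{e_j^-}=\ell_j$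 and $\langle\cdot,\cdot\rangle$ is the standard inner product. $P_{D(\mathfrak{c},\mathfrak{\ell})}=\{x\in\mathbb{R}^n: 0\le x_j\le A_j(x)\ \forall j\}$. *)

theory Defs
  imports "HOL-Analysis.Analysis"
begin

text \<open>Vectors of R^n (resp. Z^n) are represented as functions on nat that vanish
outside the index set {1..n}.  The topology on nat => real is the product topology
(HOL-Analysis Function_Topology); on the (closed) subspace of functions supported
in {1..n} it is the Euclidean topology of R^n.\<close>

definition Rn :: "nat \<Rightarrow> (nat \<Rightarrow> real) set" where
  "Rn n = {x. \<forall>k. k \<notin> {1..n} \<longrightarrow> x k = 0}"

definition Zn :: "nat \<Rightarrow> (nat \<Rightarrow> int) set" where
  "Zn n = {m. \<forall>k. k \<notin> {1..n} \<longrightarrow> m k = 0}"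

text \<open>Sign vectors sigma in {+,-}^n; True stands for +, False for -.\<close>
definition signs :: "nat \<Rightarrow> (nat \<Rightarrow> bool) set" where
  "signs n = {\<sigma>. \<forall>k. k \<notin> {1..n} \<longrightarrow> \<sigma> k}"

definition Afun :: "nat \<Rightarrow> (nat \<Rightarrow> nat \<Rightarrow> int) \<Rightarrow> (nat \<Rightarrow> int) \<Rightarrow> nat \<Rightarrow> (nat \<Rightarrow> real) \<Rightarrow> real" where
  "Afun n c l j x = real_of_int (l j) - (\<Sum>k\<in>{j+1..n}. real_of_int (c j k) * x k)"

definition twisted_cube :: "nat \<Rightarrow> (nat \<Rightarrow> nat \<Rightarrow> int) \<Rightarrow> (nat \<Rightarrow> int) \<Rightarrow> (nat \<Rightarrow> real) set" where
  "twisted_cube n c l = {x \<in> Rn n. \<forall>k\<in>{1..n}.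
      (Afun n c l k x < x k \<and> x k < 0) \<or> (0 \<le> x k \<and> x k \<le> Afun n c l k x)}"

definition polytope_PD :: "nat \<Rightarrow> (nat \<Rightarrow> nat \<Rightarrow> int) \<Rightarrow> (nat \<Rightarrow> int) \<Rightarrow> (nat \<Rightarrow> real) set" where
  "polytope_PD n c l = {x \<in> Rn n. \<forall>j\<in>{1..n}. 0 \<le> x j \<and> x j \<le> Afun n c l j x}"

definition condP :: "nat \<Rightarrow> (nat \<Rightarrow> nat \<Rightarrow> int) \<Rightarrow> (nat \<Rightarrow> int) \<Rightarrow> bool" where
  "condP n c l \<longleftrightarrow> l n \<ge> 0 \<and>
     (\<forall>k\<in>{1..n-1}. \<forall>x\<in>Rn n.
        (\<forall>i\<in>{k+1..n}. 0 \<le> x i \<and> x i \<le> Afun n c l i x) \<longrightarrow> Afun n c l k x \<ge> 0)"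

text \<open>Ray generators: e_j^+ standard basis, e_j^- = -e_j^+ - sum_{k>j} c_{jk} e_k^+.\<close>
definition eplus :: "nat \<Rightarrow> nat \<Rightarrow> int" where
  "eplus j = (\<lambda>i. if i = j then 1 else 0)"

definition eminus :: "nat \<Rightarrow> (nat \<Rightarrow> nat \<Rightarrow> int) \<Rightarrow> nat \<Rightarrow> nat \<Rightarrow> int" where
  "eminus n c j = (\<lambda>i. if i = j then -1 else if j < i \<and> i \<le> n then - c j i else 0)"

definition gen :: "nat \<Rightarrow> (nat \<Rightarrow> nat \<Rightarrow> int) \<Rightarrow> (nat \<Rightarrow> bool) \<Rightarrow> nat \<Rightarrow> nat \<Rightarrow> int" where
  "gen n c \<sigma> j = (if \<sigma> j then eplus j else eminus n c j)"

text \<open>Coefficients a_u of D = sum_j l_j D_{e_j^-}: a_{e_j^+} = 0, a_{e_j^-} = l_j.\<close>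
definition coef :: "(nat \<Rightarrow> int) \<Rightarrow> (nat \<Rightarrow> bool) \<Rightarrow> nat \<Rightarrow> int" where
  "coef l \<sigma> j = (if \<sigma> j then 0 else l j)"

definition ipZ :: "nat \<Rightarrow> (nat \<Rightarrow> int) \<Rightarrow> (nat \<Rightarrow> int) \<Rightarrow> int" where
  "ipZ n m u = (\<Sum>i\<in>{1..n}. m i * u i)"

definition cartier :: "nat \<Rightarrow> (nat \<Rightarrow> nat \<Rightarrow> int) \<Rightarrow> (nat \<Rightarrow> int) \<Rightarrow> (nat \<Rightarrow> bool) \<Rightarrow> nat \<Rightarrow> int" where
  "cartier n c l \<sigma> = (THE m. m \<in> Zn n \<and>
      (\<forall>j\<in>{1..n}. ipZ n m (gen n c \<sigma> j) = - coef l \<sigma> j))"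

end

theory Submission imports Defs begin

lemma A_cong: "(\<And>i. j < i \<Longrightarrow> x i = y i) \<Longrightarrow> Afun n c l j x = Afun n c l j y"
  unfolding Afun_def by (intro arg_cong2[where f="(-)"] refl sum.cong) auto

lemma A_upd: "j' \<le> j \<Longrightarrow> Afun n c l j (x(j' := a)) = Afun n c l j x"
  by (rule A_cong) auto

lemma A_last: "Afun n c l n x = real_of_int (l n)"
  unfolding Afun_def by simp

definition Aint :: "nat \<Rightarrow> (nat \<Rightarrow> nat \<Rightarrow> int) \<Rightarrow> (nat \<Rightarrow> int) \<Rightarrow> nat \<Rightarrow> (nat \<Rightarrow> int) \<Rightarrow> int" where
  "Aint n c l j m = l j - (\<Sum>k\<in>{j+1..n}. c j k * m k)"

lemma Aint_cong: "(\<And>i. j < i \<Longrightarrow> x i = y i) \<Longrightarrow> Aint n c l j x = Aint n c l j y"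
  unfolding Aint_def by (intro arg_cong2[where f="(-)"] refl sum.cong) auto

lemma ipZ_eplus: "j \<in> {1..n} \<Longrightarrow> ipZ n m (eplus j) = m j"
  unfolding ipZ_def eplus_def by (simp add: if_distrib cong: if_cong)

lemma ipZ_eminus: assumes "j \<in> {1..n}"
  shows "ipZ n m (eminus n c j) = - m j - (\<Sum>i\<in>{j+1..n}. c j i * m i)"
proof -
  have "ipZ n m (eminus n c j) = (\<Sum>i\<in>{1..n}. (if i = j then - m j else 0) + (if i \<in> {j+1..n} then - (c j i * m i) else 0))"
    unfolding ipZ_def eminus_def by (intro sum.cong) auto
  also have "\<dots> = - m j + (\<Sum>i\<in>{1..n}. (if i \<in> {j+1..n} then - (c j i * m i) else 0))"
    using assms by (simp only: sum.distrib) simp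
  also have "(\<Sum>i\<in>{1..n}. (if i \<in> {j+1..n} then - (c j i * m i) else 0)) = (\<Sum>i\<in>{1..n} \<inter> {j+1..n}. - (c j i * m i))"
    by (rule sum.inter_restrict[symmetric]) simp
  also have "{1..n} \<inter> {j+1..n} = {j+1..n}" using assms by auto
  finally show ?thesis by (simp add: sum_negf)
qed

lemma ipZ_gen: assumes "j \<in> {1..n}"
  shows "(ipZ n m (gen n c \<sigma> j) = - coef l \<sigma> j) \<longleftrightarrow> m j = (if \<sigma> j then 0 else Aint n c l j m)"
  using assms by (auto simp: gen_def coef_def ipZ_eplus ipZ_eminus Aint_def)

lemma agree_int:
  assumes "m \<in> Zn n" "m' \<in> Zn n"
    and "\<forall>j\<in>{J+1..n}. m j = (if \<sigma> j then 0 else Aint n c l j m)"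
    and "\<forall>j\<in>{J+1..n}. m' j = (if \<sigma>' j then 0 else Aint n c l j m')"
    and "\<forall>j>J. \<sigma> j = \<sigma>' j"
  shows "J < i \<Longrightarrow> m i = m' i"
proof (induction "n - i" arbitrary: i rule: less_induct)
  case less
  show ?case
  proof (cases "i \<le> n")
    case False then show ?thesis using assms(1,2) by (auto simp: Zn_def)
  next
    case True
    have "Aint n c l i m = Aint n c l i m'"
    proof (rule Aint_cong)
      fix k assume "i < k" then show "m k = m' k"
      proof (cases "k \<le> n")
        case True2: True
        have "n - k < n - i" using True2 \<open>i < k\<close> True by linarith
        moreover have "J < k" using less.prems \<open>i < k\<close> by linarith
        ultimately show ?thesis using less.hyps by blast
      next
        case False
        then have "k \<notin> {1..n}" by simp
        then have "m k = 0" "m' k = 0" using assms(1,2) by (simp_all add: Zn_def)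
        then show ?thesis by simp
      qed
    qed
    moreover have "i \<in> {J+1..n}" using less True by auto
    moreover have "\<sigma> i = \<sigma>' i" using assms(5) less by auto
    ultimately show ?thesis using bspec[OF assms(3), of i] bspec[OF assms(4), of i] by (simp only:)
  qed
qed

lemma cart_ex: "\<exists>m\<in>Zn n. \<forall>j\<in>{1..n}. m j = (if \<sigma> j then 0 else Aint n c l j m)"
proof -
  have "\<exists>m\<in>Zn n. \<forall>j\<in>{1..n}. j > n - d \<longrightarrow> m j = (if \<sigma> j then 0 else Aint n c l j m)" for d
  proof (induction d)
    case 0 then show ?case by (auto simp: Zn_def intro: exI[of _ "\<lambda>_. 0"])
  next
    case (Suc d)
    then obtain m where m: "m \<in> Zn n" "\<forall>j\<in>{1..n}. j > n - d \<longrightarrow> m j = (if \<sigma> j then 0 else Aint n c l j m)" by blast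
    show ?case
    proof (cases "d < n")
      case False then show ?thesis using m by (intro bexI[of _ m]) auto
    next
      case True
      define j0 where "j0 = n - d"
      define m' where "m' = m(j0 := (if \<sigma> j0 then 0 else Aint n c l j0 m))"
      have j0: "j0 \<in> {1..n}" using True by (auto simp: j0_def)
      have "m' \<in> Zn n" using m j0 by (auto simp: Zn_def m'_def)
      moreover have "\<forall>j\<in>{1..n}. j > n - Suc d \<longrightarrow> m' j = (if \<sigma> j then 0 else Aint n c l j m')"
      proof (intro ballI impI)
        fix j assume j: "j \<in> {1..n}" "j > n - Suc d"
        have e: "Aint n c l j m' = Aint n c l j m" by (rule Aint_cong) (use j j0_def True in \<open>auto simp: m'_def\<close>)
        show "m' j = (if \<sigma> j then 0 else Aint n c l j m')"
        proof (cases "j = j0")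
          case True
          have "m' j0 = (if \<sigma> j0 then 0 else Aint n c l j0 m)" by (simp add: m'_def)
          with e True show ?thesis by simp
        next
          case False then have "j > n - d" using j j0_def True by auto
          then show ?thesis using m j e False by (simp add: m'_def)
        qed
      qed
      ultimately show ?thesis by blast
    qed
  qed
  from this[of n] show ?thesis by simp
qed

definition solves where
  "solves n c l \<sigma> m \<longleftrightarrow> m \<in> Zn n \<and> (\<forall>j\<in>{1..n}. m j = (if \<sigma> j then 0 else Aint n c l j m))"

lemma solves_iff: "(m \<in> Zn n \<and> (\<forall>j\<in>{1..n}. ipZ n m (gen n c \<sigma> j) = - coef l \<sigma> j)) \<longleftrightarrow> solves n c l \<sigma> m"
  unfolding solves_def by (intro conj_cong refl ball_cong) (simp add: ipZ_gen)

lemma solves_unique: "solves n c l \<sigma> m \<Longrightarrow> solves n c l \<sigma> m' \<Longrightarrow> m = m'"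
proof -
  assume a: "solves n c l \<sigma> m" "solves n c l \<sigma> m'"
  have m1: "m \<in> Zn n" "m' \<in> Zn n" using a unfolding solves_def by simp_all
  have m2: "\<forall>j\<in>{0+1..n}. m j = (if \<sigma> j then 0 else Aint n c l j m)"
    "\<forall>j\<in>{0+1..n}. m' j = (if \<sigma> j then 0 else Aint n c l j m')"
    using a unfolding solves_def by simp_all
  have "m i = m' i" if "0 < i" for i
    using agree_int[OF m1 m2] that by simp
  moreover have "m 0 = m' 0" using a by (simp add: solves_def Zn_def)
  ultimately show "m = m'" by (metis neq0_conv ext)
qed

lemma cart_solves: "solves n c l \<sigma> (cartier n c l \<sigma>)"
proof -
  obtain m where m: "solves n c l \<sigma> m" using cart_ex unfolding solves_def by blast
  have "cartier n c l \<sigma> = (THE m. solves n c l \<sigma> m)" unfolding cartier_def solves_iff ..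
  also have "\<dots> = m" using m solves_unique by blast
  finally show ?thesis using m by simp
qed

lemma cart_char:
  "cartier n c l \<sigma> \<in> Zn n \<and> (\<forall>j\<in>{1..n}. cartier n c l \<sigma> j = (if \<sigma> j then 0 else Aint n c l j (cartier n c l \<sigma>)))"
  using cart_solves unfolding solves_def .

definition Mv :: "nat \<Rightarrow> (nat \<Rightarrow> nat \<Rightarrow> int) \<Rightarrow> (nat \<Rightarrow> int) \<Rightarrow> (nat \<Rightarrow> bool) \<Rightarrow> nat \<Rightarrow> real" where
  "Mv n c l \<sigma> = (\<lambda>k. real_of_int (cartier n c l \<sigma> k))"

lemma A_M: "Afun n c l j (Mv n c l \<sigma>) = real_of_int (Aint n c l j (cartier n c l \<sigma>))"
  by (simp add: Afun_def Aint_def Mv_def)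

lemma M_Rn: "Mv n c l \<sigma> \<in> Rn n"
  using cart_char[of n c l \<sigma>] by (auto simp: Mv_def Rn_def Zn_def)

lemma M_char: "j \<in> {1..n} \<Longrightarrow> Mv n c l \<sigma> j = (if \<sigma> j then 0 else Afun n c l j (Mv n c l \<sigma>))"
proof -
  assume j: "j \<in> {1..n}"
  have eq: "cartier n c l \<sigma> j = (if \<sigma> j then 0 else Aint n c l j (cartier n c l \<sigma>))"
    using bspec[OF conjunct2[OF cart_char] j] .
  show ?thesis unfolding A_M using eq by (simp add: Mv_def)
qed

lemma ball_sub: "\<forall>x\<in>B. P x \<Longrightarrow> A \<subseteq> B \<Longrightarrow> \<forall>x\<in>A. P x" by blast

lemma M_upd: "j < i \<Longrightarrow> Mv n c l (\<sigma>(j := b)) i = Mv n c l \<sigma> i"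
proof -
  assume ji: "j < i"
  let ?m = "cartier n c l (\<sigma>(j := b))" and ?m' = "cartier n c l \<sigma>"
  have m1: "?m \<in> Zn n" "?m' \<in> Zn n" using conjunct1[OF cart_char] by blast+
  have sub: "{j+1..n} \<subseteq> {1..n}" by auto
  have m2: "\<forall>k\<in>{j+1..n}. ?m k = (if (\<sigma>(j := b)) k then 0 else Aint n c l k ?m)"
    "\<forall>k\<in>{j+1..n}. ?m' k = (if \<sigma> k then 0 else Aint n c l k ?m')"
    by (rule ball_sub[OF conjunct2[OF cart_char] sub])+
  have "?m i = ?m' i" using agree_int[OF m1 m2] ji by simp
  then show ?thesis by (simp add: Mv_def)
qed

lemma A_M_upd: "Afun n c l j (Mv n c l (\<sigma>(j := b))) = Afun n c l j (Mv n c l \<sigma>)"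
  by (rule A_cong) (simp add: M_upd)

lemma signs_upd: "\<sigma> \<in> signs n \<Longrightarrow> j \<in> {1..n} \<Longrightarrow> \<sigma>(j := b) \<in> signs n"
  by (auto simp: signs_def)

lemma M_in_C: "Mv n c l \<sigma> \<in> twisted_cube n c l \<longleftrightarrow> (\<forall>k\<in>{1..n}. Afun n c l k (Mv n c l \<sigma>) \<ge> 0)"
proof -
  have "(Afun n c l k (Mv n c l \<sigma>) < Mv n c l \<sigma> k \<and> Mv n c l \<sigma> k < 0 \<or>
         0 \<le> Mv n c l \<sigma> k \<and> Mv n c l \<sigma> k \<le> Afun n c l k (Mv n c l \<sigma>)) \<longleftrightarrow> Afun n c l k (Mv n c l \<sigma>) \<ge> 0"
    if "k \<in> {1..n}" for k
    using M_char[OF that, of c l \<sigma>] by (cases "\<sigma> k") auto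
  then show ?thesis using M_Rn by (auto simp: twisted_cube_def)
qed

definition Bp :: "nat \<Rightarrow> (nat \<Rightarrow> nat \<Rightarrow> int) \<Rightarrow> (nat \<Rightarrow> int) \<Rightarrow> bool" where
  "Bp n c l \<longleftrightarrow> (\<forall>\<sigma>\<in>signs n. \<forall>k\<in>{1..n}. Afun n c l k (Mv n c l \<sigma>) \<ge> 0)"

lemma L1: "(\<forall>\<sigma>\<in>signs n. (\<lambda>k. real_of_int (cartier n c l \<sigma> k)) \<in> twisted_cube n c l) \<longleftrightarrow> Bp n c l"
  using M_in_C[of n c l] unfolding Bp_def Mv_def by blast

lemma L2: "(\<forall>\<sigma>\<in>signs n. \<forall>k\<in>{1..n}. cartier n c l \<sigma> k \<ge> 0) \<longleftrightarrow> Bp n c l"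
proof
  assume H: "\<forall>\<sigma>\<in>signs n. \<forall>k\<in>{1..n}. cartier n c l \<sigma> k \<ge> 0"
  show "Bp n c l" unfolding Bp_def
  proof (intro ballI)
    fix \<sigma> k assume s: "\<sigma> \<in> signs n" and k: "k \<in> {1..n}"
    have "Mv n c l (\<sigma>(k := False)) k \<ge> 0" using H signs_upd[OF s k] k by (simp add: Mv_def)
    then show "Afun n c l k (Mv n c l \<sigma>) \<ge> 0" using M_char[OF k, of c l "\<sigma>(k := False)"] A_M_upd by simp
  qed
next
  assume "Bp n c l"
  then show "\<forall>\<sigma>\<in>signs n. \<forall>k\<in>{1..n}. cartier n c l \<sigma> k \<ge> 0" unfolding Bp_def
    using M_char by (metis Mv_def of_int_0_le_iff order_refl)
qed

lemma aff_id: "a + b j * Afun n c l j y + (\<Sum>i\<in>{j+1..n}. b i * y i) =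
   (a + b j * real_of_int (l j)) + (\<Sum>i\<in>{j+1..n}. (b i - b j * real_of_int (c j i)) * y i)"
  by (simp add: Afun_def algebra_simps sum_distrib_left sum_subtractf sum.distrib)

lemma affine_ind:
  fixes a :: real and b :: "nat \<Rightarrow> real"
  assumes "1 \<le> j" "j \<le> n+1" "\<forall>\<sigma>\<in>signs n. a + (\<Sum>i\<in>{j..n}. b i * Mv n c l \<sigma> i) \<ge> 0"
    "(\<forall>i\<in>{j..n}. 0 \<le> x i \<and> x i \<le> Afun n c l i x)"
  shows "a + (\<Sum>i\<in>{j..n}. b i * x i) \<ge> 0"
  using assms
proof (induction "n + 1 - j" arbitrary: j a b rule: less_induct)
  case less
  show ?case
  proof (cases "j = n + 1")
    case True
    have "(\<lambda>_. True) \<in> signs n" by (simp add: signs_def)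
    then show ?thesis using less.prems(3) True by auto
  next
    case False
    then have jn: "j \<le> n" "j \<in> {1..n}" using less.prems by auto
    have split: "(\<Sum>i\<in>{j..n}. b i * y i) = b j * y j + (\<Sum>i\<in>{j+1..n}. b i * y i)" for y
      using jn by (simp add: sum.atLeast_Suc_atMost)
    have g: "a + (\<Sum>i\<in>{j+1..n}. b i * x i) \<ge> 0"
    proof (rule less.hyps[of "j+1"])
      show "\<forall>\<sigma>\<in>signs n. a + (\<Sum>i\<in>{j+1..n}. b i * Mv n c l \<sigma> i) \<ge> 0"
      proof
        fix \<sigma> assume s: "\<sigma> \<in> signs n"
        have "a + (\<Sum>i\<in>{j..n}. b i * Mv n c l (\<sigma>(j:=True)) i) \<ge> 0"
          using less.prems(3) signs_upd[OF s jn(2)] by blast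
        moreover have "(\<Sum>i\<in>{j+1..n}. b i * Mv n c l (\<sigma>(j:=True)) i) = (\<Sum>i\<in>{j+1..n}. b i * Mv n c l \<sigma> i)"
          by (intro sum.cong) (auto simp: M_upd)
        moreover have "Mv n c l (\<sigma>(j:=True)) j = 0" using M_char[OF jn(2), of c l "\<sigma>(j:=True)"] by simp
        ultimately show "a + (\<Sum>i\<in>{j+1..n}. b i * Mv n c l \<sigma> i) \<ge> 0" by (simp add: split)
      qed
    qed (use less.prems jn in auto)
    have h: "(a + b j * real_of_int (l j)) + (\<Sum>i\<in>{j+1..n}. (b i - b j * real_of_int (c j i)) * x i) \<ge> 0"
    proof (rule less.hyps[of "j+1"])
      show "\<forall>\<sigma>\<in>signs n. (a + b j * real_of_int (l j)) + (\<Sum>i\<in>{j+1..n}. (b i - b j * real_of_int (c j i)) * Mv n c l \<sigma> i) \<ge> 0"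
      proof
        fix \<sigma> assume s: "\<sigma> \<in> signs n"
        have "a + (\<Sum>i\<in>{j..n}. b i * Mv n c l (\<sigma>(j:=False)) i) \<ge> 0"
          using less.prems(3) signs_upd[OF s jn(2)] by blast
        moreover have "(\<Sum>i\<in>{j+1..n}. b i * Mv n c l (\<sigma>(j:=False)) i) = (\<Sum>i\<in>{j+1..n}. b i * Mv n c l \<sigma> i)"
          by (intro sum.cong) (auto simp: M_upd)
        moreover have "Mv n c l (\<sigma>(j:=False)) j = Afun n c l j (Mv n c l \<sigma>)"
          using M_char[OF jn(2), of c l "\<sigma>(j:=False)"] A_M_upd by simp
        ultimately have "a + b j * Afun n c l j (Mv n c l \<sigma>) + (\<Sum>i\<in>{j+1..n}. b i * Mv n c l \<sigma> i) \<ge> 0"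
          by (simp add: split add.assoc)
        then show "(a + b j * real_of_int (l j)) + (\<Sum>i\<in>{j+1..n}. (b i - b j * real_of_int (c j i)) * Mv n c l \<sigma> i) \<ge> 0"
          using aff_id[where a=a and b=b and j=j and n=n and c=c and l=l and y="Mv n c l \<sigma>"] by linarith
      qed
    qed (use less.prems jn in auto)
    then have h': "a + b j * Afun n c l j x + (\<Sum>i\<in>{j+1..n}. b i * x i) \<ge> 0" using aff_id[where a=a and b=b and j=j and n=n and c=c and l=l and y=x] by linarith
    have xj: "0 \<le> x j" "x j \<le> Afun n c l j x" using less.prems(4) jn by auto
    show ?thesis
    proof (cases "b j \<ge> 0")
      case True
      then have "b j * x j \<ge> 0" using xj by simp
      then show ?thesis using g by (simp add: split)
    next
      case False
      then have "b j * x j \<ge> b j * Afun n c l j x" using xj by (simp add: mult_left_mono_neg)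
      then show ?thesis using h' by (simp add: split)
    qed
  qed
qed


lemma L3: assumes "condP n c l" shows "Bp n c l"
  unfolding Bp_def
proof (intro ballI)
  fix \<sigma> k assume \<sigma>: "\<sigma> \<in> signs n" and k: "k \<in> {1..n}"
  have "1 \<le> k \<Longrightarrow> k \<le> n \<Longrightarrow> Afun n c l k (Mv n c l \<sigma>) \<ge> 0" for k
  proof (induction "n - k" arbitrary: k rule: less_induct)
    case less
    show ?case
    proof (cases "k = n")
      case True then show ?thesis using assms by (simp add: A_last condP_def)
    next
      case False
      have k': "k \<in> {1..n-1}" using less.prems False by auto
      have "\<forall>i\<in>{k+1..n}. 0 \<le> Mv n c l \<sigma> i \<and> Mv n c l \<sigma> i \<le> Afun n c l i (Mv n c l \<sigma>)"
      proof
        fix i assume i: "i \<in> {k+1..n}"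
        have "n - i < n - k" "1 \<le> i" "i \<le> n" using i less.prems by auto
        then have A: "Afun n c l i (Mv n c l \<sigma>) \<ge> 0" using less.hyps by blast
        have "i \<in> {1..n}" using i less.prems by auto
        from M_char[OF this] A show "0 \<le> Mv n c l \<sigma> i \<and> Mv n c l \<sigma> i \<le> Afun n c l i (Mv n c l \<sigma>)"
          by (cases "\<sigma> i") simp_all
      qed
      then show ?thesis using assms k' M_Rn unfolding condP_def by blast
    qed
  qed
  then show "Afun n c l k (Mv n c l \<sigma>) \<ge> 0" using k by auto
qed

lemma A_alt: "Afun n c l k y = real_of_int (l k) + (\<Sum>i\<in>{k+1..n}. - real_of_int (c k i) * y i)"
  by (simp add: Afun_def sum_negf)

lemma L4: assumes "Bp n c l" "n \<ge> 1" shows "condP n c l"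
  unfolding condP_def
proof (intro conjI ballI impI)
  have "(\<lambda>_. True) \<in> signs n" by (simp add: signs_def)
  then have "Afun n c l n (Mv n c l (\<lambda>_. True)) \<ge> 0" using assms unfolding Bp_def by auto
  then show "l n \<ge> 0" by (simp add: A_last)
next
  fix k x assume k: "k \<in> {1..n-1}" and x: "x \<in> Rn n"
    and H: "\<forall>i\<in>{k+1..n}. 0 \<le> x i \<and> x i \<le> Afun n c l i x"
  have "real_of_int (l k) + (\<Sum>i\<in>{k+1..n}. - real_of_int (c k i) * x i) \<ge> 0"
  proof (rule affine_ind[where c=c and l=l])
    show "\<forall>\<sigma>\<in>signs n. real_of_int (l k) + (\<Sum>i\<in>{k+1..n}. - real_of_int (c k i) * Mv n c l \<sigma> i) \<ge> 0"
      using assms(1) k unfolding Bp_def A_alt[symmetric] by auto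
  qed (use k H in auto)
  then show "Afun n c l k x \<ge> 0" by (simp only: A_alt)
qed

lemma L5: assumes "condP n c l" shows "twisted_cube n c l = polytope_PD n c l"
proof
  show "polytope_PD n c l \<subseteq> twisted_cube n c l"
    unfolding polytope_PD_def twisted_cube_def by auto
next
  show "twisted_cube n c l \<subseteq> polytope_PD n c l"
  proof
    fix x assume x: "x \<in> twisted_cube n c l"
    have xR: "x \<in> Rn n" using x by (simp add: twisted_cube_def)
    have "1 \<le> k \<Longrightarrow> k \<le> n \<Longrightarrow> 0 \<le> x k \<and> x k \<le> Afun n c l k x" for k
    proof (induction "n - k" arbitrary: k rule: less_induct)
      case less
      have A: "Afun n c l k x \<ge> 0"
      proof (cases "k = n")
        case True then show ?thesis using assms by (simp add: A_last condP_def)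
      next
        case False
        have k': "k \<in> {1..n-1}" using less.prems False by auto
        have "\<forall>i\<in>{k+1..n}. 0 \<le> x i \<and> x i \<le> Afun n c l i x"
        proof
          fix i assume i: "i \<in> {k+1..n}"
          have "n - i < n - k" "1 \<le> i" "i \<le> n" using i less.prems by auto
          then show "0 \<le> x i \<and> x i \<le> Afun n c l i x" using less.hyps by blast
        qed
        then show ?thesis using assms k' xR unfolding condP_def by blast
      qed
      have "k \<in> {1..n}" using less.prems by auto
      then have "(Afun n c l k x < x k \<and> x k < 0) \<or> (0 \<le> x k \<and> x k \<le> Afun n c l k x)"
        using x unfolding twisted_cube_def by blast
      then show ?case using A by linarith
    qed
    then show "x \<in> polytope_PD n c l" using xR unfolding polytope_PD_def by auto
  qed
qed

lemma cont_A: "continuous_on UNIV (Afun n c l j)"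
  unfolding Afun_def by (intro continuous_intros continuous_on_product_coordinates)

lemma L6: "closed (polytope_PD n c l)"
proof -
  have "polytope_PD n c l = (\<Inter>k\<in>-{1..n}. {x. x k = 0}) \<inter>
     (\<Inter>j\<in>{1..n}. {x. 0 \<le> x j} \<inter> {x. x j \<le> Afun n c l j x})"
    unfolding polytope_PD_def Rn_def by auto
  moreover have "closed \<dots>"
    by (intro closed_Int closed_INT ballI closed_Collect_le closed_Collect_eq cont_A
        continuous_on_product_coordinates continuous_on_const)
  ultimately show ?thesis by simp
qed

fun Gx :: "nat \<Rightarrow> (nat \<Rightarrow> nat \<Rightarrow> int) \<Rightarrow> (nat \<Rightarrow> int) \<Rightarrow> nat \<Rightarrow> nat \<Rightarrow> (nat \<Rightarrow> real) \<Rightarrow> (nat \<Rightarrow> real)" where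
  "Gx n c l k 0 v = v"
| "Gx n c l k (Suc d) v = (Gx n c l k d v)(k - Suc d := min 0 (Afun n c l (k - Suc d) (Gx n c l k d v)) / 2)"

lemma G1: "1 \<le> k \<Longrightarrow> k \<le> i \<or> i < k - d \<Longrightarrow> Gx n c l k d v i = v i"
proof (induction d)
  case 0 then show ?case by simp
next
  case (Suc d)
  have "i \<noteq> k - Suc d" using Suc.prems by auto
  moreover have "k \<le> i \<or> i < k - d" using Suc.prems by auto
  ultimately show ?case using Suc.IH Suc.prems(1) by simp
qed

lemma G2: "d \<le> k - 1 \<Longrightarrow> k - d \<le> i \<Longrightarrow> i < k \<Longrightarrow>
   Gx n c l k d v i = min 0 (Afun n c l i (Gx n c l k d v)) / 2"
proof (induction d arbitrary: i)
  case 0 then show ?case by simp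
next
  case (Suc d)
  let ?w = "Gx n c l k d v" and ?j = "k - Suc d"
  show ?case
  proof (cases "i = ?j")
    case True
    have e: "Afun n c l ?j (?w(?j := min 0 (Afun n c l ?j ?w) / 2)) = Afun n c l ?j ?w" by (rule A_upd) simp
    show ?thesis using True by (simp only: Gx.simps fun_upd_same e)
  next
    case False
    then have "k - d \<le> i" using Suc.prems by auto
    then have "?w i = min 0 (Afun n c l i ?w) / 2" using Suc.IH Suc.prems by simp
    moreover have "?j \<le> i" using Suc.prems by auto
    then have e: "Afun n c l i (?w(?j := min 0 (Afun n c l ?j ?w) / 2)) = Afun n c l i ?w" by (rule A_upd)
    show ?thesis using False \<open>?w i = _\<close> by (simp only: Gx.simps fun_upd_other[OF False] e)
  qed
qed

lemma G3: "continuous_on UNIV (Gx n c l k d)"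
proof (induction d)
  case 0 then show ?case by (simp add: continuous_on_id')
next
  case (Suc d)
  let ?j = "k - Suc d"
  have cA: "continuous_on UNIV (\<lambda>v. Afun n c l ?j (Gx n c l k d v))"
    by (rule continuous_on_compose2[OF cont_A Suc.IH]) auto
  show ?case
  proof (rule continuous_on_coordinatewise_then_product)
    fix i
    show "continuous_on UNIV (\<lambda>v. Gx n c l k (Suc d) v i)"
    proof (cases "i = ?j")
      case True
      then show ?thesis using cA by (simp, intro continuous_intros) auto
    next
      case False
      then show ?thesis using continuous_on_product_then_coordinatewise[OF Suc.IH, of i] by simp
    qed
  qed
qed

lemma F_ok: "(a < min 0 a / 2 \<and> min 0 a / 2 < 0) \<or> (0 \<le> min 0 (a::real) / 2 \<and> min 0 a / 2 \<le> a)"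
  by (cases "a \<ge> 0") auto

lemma L7: assumes cl: "closed (twisted_cube n c l)" shows "Bp n c l"
proof (rule ccontr)
  assume "\<not> Bp n c l"
  then obtain \<sigma> k0 where \<sigma>: "\<sigma> \<in> signs n" and k0: "k0 \<in> {1..n}" "Afun n c l k0 (Mv n c l \<sigma>) < 0"
    unfolding Bp_def by force
  define m where "m = Mv n c l \<sigma>"
  define K where "K = {k \<in> {1..n}. Afun n c l k m < 0}"
  have fK: "finite K" "K \<noteq> {}" using k0 by (auto simp: K_def m_def)
  define k where "k = Max K"
  have kK: "k \<in> K" using fK by (simp add: k_def)
  then have k: "k \<in> {1..n}" "Afun n c l k m < 0" by (auto simp: K_def)
  have above: "Afun n c l i m \<ge> 0" if "i \<in> {k+1..n}" for i
  proof (rule ccontr)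
    assume "\<not> ?thesis"
    then have "i \<in> K" using that by (auto simp: K_def)
    then have "i \<le> k" using fK by (simp add: k_def)
    then show False using that by auto
  qed
  have mR: "m \<in> Rn n" by (simp add: m_def M_Rn)
  define u where "u = (\<lambda>t::real. m(k := - t))"
  define y where "y = (\<lambda>t. Gx n c l k (k - 1) (u t))"
  have cu: "continuous_on UNIV u"
  proof (rule continuous_on_coordinatewise_then_product)
    fix i show "continuous_on UNIV (\<lambda>t. u t i)"
      by (cases "i = k") (simp_all add: u_def continuous_on_minus continuous_on_id)
  qed
  have cy: "continuous_on UNIV y"
    unfolding y_def by (rule continuous_on_compose2[OF G3 cu]) auto
  have k1: "1 \<le> k" using k by auto
  have yv: "y t i = u t i" if "k \<le> i \<or> i < 1" for t i
    unfolding y_def using G1[OF k1, of i "k - 1"] that k1 by auto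
  have yA: "Afun n c l i (y t) = Afun n c l i m" if "k \<le> i" for t i
  proof (rule A_cong)
    fix j assume "i < j" then show "y t j = m j" using yv[of j t] that by (simp add: u_def)
  qed
  have yk: "y t k = - t" for t using yv[of k t] by (simp add: u_def)
  have ylow: "y t i = min 0 (Afun n c l i (y t)) / 2" if "1 \<le> i" "i < k" for t i
    unfolding y_def using G2[of "k - 1" k i] that by auto
  define \<epsilon> where "\<epsilon> = - Afun n c l k m"
  have \<epsilon>: "\<epsilon> > 0" using k by (simp add: \<epsilon>_def)
  have inC: "y t \<in> twisted_cube n c l" if t: "0 < t" "t < \<epsilon>" for t
    unfolding twisted_cube_def
  proof (intro CollectI conjI ballI)
    show "y t \<in> Rn n" unfolding Rn_def
    proof (intro CollectI allI impI)
      fix i assume i: "i \<notin> {1..n}"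
      then have "i = 0 \<or> n < i" by auto
      then have "y t i = m i" using yv[of i t] k by (auto simp: u_def)
      then show "y t i = 0" using mR i by (simp add: Rn_def)
    qed
  next
    fix i assume i: "i \<in> {1..n}"
    consider "i < k" | "i = k" | "k < i" by linarith
    then show "(Afun n c l i (y t) < y t i \<and> y t i < 0) \<or> (0 \<le> y t i \<and> y t i \<le> Afun n c l i (y t))"
    proof cases
      case 1 then show ?thesis using ylow[of i t] i F_ok[of "Afun n c l i (y t)"] by auto
    next
      case 2 then show ?thesis using yk[of t] yA[of k t] t by (simp add: \<epsilon>_def)
    next
      case 3
      have "y t i = m i" using yv[of i t] 3 by (simp add: u_def)
      moreover have "Afun n c l i (y t) = Afun n c l i m" using yA[of i t] 3 by simp
      moreover have "Afun n c l i m \<ge> 0" using above[of i] 3 i by auto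
      moreover have "m i = (if \<sigma> i then 0 else Afun n c l i m)" unfolding m_def by (rule M_char[OF i])
      ultimately show ?thesis by (cases "\<sigma> i") simp_all
    qed
  qed
  have notC: "y 0 \<notin> twisted_cube n c l"
  proof
    assume "y 0 \<in> twisted_cube n c l"
    then have "(Afun n c l k (y 0) < y 0 k \<and> y 0 k < 0) \<or> (0 \<le> y 0 k \<and> y 0 k \<le> Afun n c l k (y 0))"
      using k(1) unfolding twisted_cube_def by blast
    then show False using yk[of 0] yA[of k 0] k(2) by simp
  qed
  have clv: "closed (y -` twisted_cube n c l)" by (rule closed_vimage[OF cl cy])
  have "{0<..<\<epsilon>} \<subseteq> y -` twisted_cube n c l" using inC by auto
  then have "closure {0<..<\<epsilon>} \<subseteq> y -` twisted_cube n c l"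
    using closure_minimal[OF _ clv] by blast
  moreover have "(0::real) \<in> closure {0<..<\<epsilon>}" using \<epsilon> by simp
  ultimately have "0 \<in> y -` twisted_cube n c l" by blast
  then show False using notC by simp
qed


theorem proposition2p1:
  fixes n :: nat and c :: "nat \<Rightarrow> nat \<Rightarrow> int" and l :: "nat \<Rightarrow> int"
  assumes "n \<ge> 1"
  shows "(closed (twisted_cube n c l)
          \<longleftrightarrow> (\<forall>\<sigma>\<in>signs n. (\<lambda>k. real_of_int (cartier n c l \<sigma> k)) \<in> twisted_cube n c l))
       \<and> ((\<forall>\<sigma>\<in>signs n. (\<lambda>k. real_of_int (cartier n c l \<sigma> k)) \<in> twisted_cube n c l)
          \<longleftrightarrow> (\<forall>\<sigma>\<in>signs n. \<forall>k\<in>{1..n}. cartier n c l \<sigma> k \<ge> 0))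
       \<and> ((\<forall>\<sigma>\<in>signs n. \<forall>k\<in>{1..n}. cartier n c l \<sigma> k \<ge> 0) \<longleftrightarrow> condP n c l)
       \<and> (condP n c l \<longleftrightarrow> twisted_cube n c l = polytope_PD n c l)"
proof -
  have PB: "condP n c l \<longleftrightarrow> Bp n c l" using L3 L4[OF _ assms] by blast
  have CB: "closed (twisted_cube n c l) \<longleftrightarrow> Bp n c l"
    using L7 L4[OF _ assms] L5 L6 by metis
  have EB: "twisted_cube n c l = polytope_PD n c l \<longleftrightarrow> Bp n c l"
    using L7 L4[OF _ assms] L5 L6 by metis
  show ?thesis using PB CB EB L1[of n c l] L2[of n c l] by blast
qed

end
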